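(* Let $\mathcal{B}=(T,\bowtie)$ be a block of transactions and let $\mathcal S$ be a valid schedule of $\mathcal{B}$. Then the scheduling-graph scheduler $GBR$ run on $\mathcal S$ is sequentially deterministic: there exists a total order $\tau$ of $T$ such that, for every initial global state, every execution of $GBR$ on $\mathcal S$ from that state produces the same result for every transaction and the same final global state as executing the transactions of $T$ one at a time, without concurrency, in the order $\tau$ from that state.
   Context: A block is a finite set $T$ of transactions. Each transaction $tx$ operates on objects of a global state, is deterministic (its effect and returned result depend only on its input parameters and the values it reads), and is associated with a read-set $R(tx)$ and a write-set $W(tx)$ containing all objects it may read, respectively write, in any possible execution. Two distinct transactions $tx_1,tx_2$ conflict, written $tx_1\bowtie tx_2$, if $R(tx_1)\cap W(tx_2)\neq\emptyset$, or $W(tx_1)\cap R(tx_2)\neq\emptyset$, or $W(tx_1)\cap W(tx_2)\neq\emptyset$. A schedule is a set $\mathcal S\subseteq T\times T$ such that the directed graph $(T,\mathcal S)$ is acyclic; it is valid if for every pair $tx\bowtie tx'$ the graph $(T,\mathcal S)$ contains a directed path from $tx$ to $tx'$ or from $tx'$ to $tx$. The scheduler $GBR$ executes a schedule $\mathcal S$ by running each transaction in its own thread; the thread of $tx$ waits until every $tx'$ with $(tx',tx)\in\mathcal S$ has finished executing (signalled only after $tx'$ has completed), then reads the latest version of each object in $R(tx)$, executes $tx$, stores the new values of $W(tx)$, emits the result of $tx$, and signals all $tx''$ with $(tx,tx'')\in\mathcal S$. Transactions not ordered by such waiting may run concurrently. *)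

theory Defs
  imports Main
begin

(* Transactions are elements of type 't, objects of type 'o, values 'v, results 'r.
   R t / W t : read-set / write-set of transaction t.
   f t s = (new values, result): executing t on state s; the new value of object o
   is (fst (f t s)) o, used only for o in W t (all other objects keep their value). *)

definition conflict :: "('t \<Rightarrow> 'o set) \<Rightarrow> ('t \<Rightarrow> 'o set) \<Rightarrow> 't \<Rightarrow> 't \<Rightarrow> bool" where
  "conflict R W t1 t2 \<longleftrightarrow> t1 \<noteq> t2 \<and>
     (R t1 \<inter> W t2 \<noteq> {} \<or> W t1 \<inter> R t2 \<noteq> {} \<or> W t1 \<inter> W t2 \<noteq> {})"

definition schedule :: "'t set \<Rightarrow> ('t \<times> 't) set \<Rightarrow> bool" where
  "schedule T S \<longleftrightarrow> S \<subseteq> T \<times> T \<and> acyclic S"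

definition valid_schedule :: "('t \<Rightarrow> 'o set) \<Rightarrow> ('t \<Rightarrow> 'o set) \<Rightarrow> 't set \<Rightarrow> ('t \<times> 't) set \<Rightarrow> bool" where
  "valid_schedule R W T S \<longleftrightarrow> schedule T S \<and>
     (\<forall>t\<in>T. \<forall>t'\<in>T. conflict R W t t' \<longrightarrow> (t, t') \<in> S\<^sup>+ \<or> (t', t) \<in> S\<^sup>+)"

definition deterministic ::
  "'t set \<Rightarrow> ('t \<Rightarrow> 'o set) \<Rightarrow> ('t \<Rightarrow> ('o \<Rightarrow> 'v) \<Rightarrow> ('o \<Rightarrow> 'v) \<times> 'r) \<Rightarrow> bool" where
  "deterministic T R f \<longleftrightarrow>
     (\<forall>t\<in>T. \<forall>s s'. (\<forall>x\<in>R t. s x = s' x) \<longrightarrow> f t s = f t s')"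

definition apply_tx ::
  "('t \<Rightarrow> 'o set) \<Rightarrow> ('t \<Rightarrow> ('o \<Rightarrow> 'v) \<Rightarrow> ('o \<Rightarrow> 'v) \<times> 'r) \<Rightarrow> 't \<Rightarrow> ('o \<Rightarrow> 'v) \<Rightarrow> ('o \<Rightarrow> 'v)" where
  "apply_tx W f t s = (\<lambda>x. if x \<in> W t then fst (f t s) x else s x)"

definition seq_run ::
  "('t \<Rightarrow> 'o set) \<Rightarrow> ('t \<Rightarrow> ('o \<Rightarrow> 'v) \<Rightarrow> ('o \<Rightarrow> 'v) \<times> 'r) \<Rightarrow> 't list \<Rightarrow> ('o \<Rightarrow> 'v)
     \<Rightarrow> ('o \<Rightarrow> 'v) \<times> ('t \<Rightarrow> 'r option)" where
  "seq_run W f \<tau> s0 =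
     foldl (\<lambda>(s, res) t. (apply_tx W f t s, res(t := Some (snd (f t s))))) (s0, (\<lambda>_. None)) \<tau>"

(* Begin t : thread of t passes its waiting point;
   Rd t A  : thread of t reads the latest versions of the objects in A (atomically);
   Wr t B  : thread of t stores the new values of the objects in B (atomically);
   Fin t   : thread of t emits the result and signals its successors. *)
datatype ('t, 'o) event = Begin 't | Rd 't "'o set" | Wr 't "'o set" | Fin 't

fun ev_tx :: "('t, 'o) event \<Rightarrow> 't" where
  "ev_tx (Begin t) = t" | "ev_tx (Rd t A) = t" | "ev_tx (Wr t B) = t" | "ev_tx (Fin t) = t"

definition pairwise_disjoint_list :: "'a set list \<Rightarrow> bool" where
  "pairwise_disjoint_list As \<longleftrightarrow>
     (\<forall>i<length As. \<forall>j<length As. i \<noteq> j \<longrightarrow> As ! i \<inter> As ! j = {})"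

definition thread_ok ::
  "('t \<Rightarrow> 'o set) \<Rightarrow> ('t \<Rightarrow> 'o set) \<Rightarrow> 't \<Rightarrow> ('t, 'o) event list \<Rightarrow> bool" where
  "thread_ok R W t evs \<longleftrightarrow>
     (\<exists>As Bs. evs = [Begin t] @ map (Rd t) As @ map (Wr t) Bs @ [Fin t] \<and>
        pairwise_disjoint_list As \<and> \<Union>(set As) = R t \<and>
        pairwise_disjoint_list Bs \<and> \<Union>(set Bs) = W t)"

definition gbr_execution ::
  "('t \<Rightarrow> 'o set) \<Rightarrow> ('t \<Rightarrow> 'o set) \<Rightarrow> 't set \<Rightarrow> ('t \<times> 't) set \<Rightarrow> ('t, 'o) event list \<Rightarrow> bool" where
  "gbr_execution R W T S es \<longleftrightarrow>
     (\<forall>e\<in>set es. ev_tx e \<in> T) \<and>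
     (\<forall>t\<in>T. thread_ok R W t (filter (\<lambda>e. ev_tx e = t) es)) \<and>
     (\<forall>t' t i. (t', t) \<in> S \<longrightarrow> i < length es \<longrightarrow> es ! i = Begin t \<longrightarrow>
        (\<exists>j<i. es ! j = Fin t'))"

(* Configuration: global state, local read buffers of the threads, emitted results *)
fun gbr_step ::
  "('t \<Rightarrow> ('o \<Rightarrow> 'v) \<Rightarrow> ('o \<Rightarrow> 'v) \<times> 'r) \<Rightarrow>
   ('o \<Rightarrow> 'v) \<times> ('t \<Rightarrow> 'o \<Rightarrow> 'v) \<times> ('t \<Rightarrow> 'r option) \<Rightarrow> ('t, 'o) event \<Rightarrow>
   ('o \<Rightarrow> 'v) \<times> ('t \<Rightarrow> 'o \<Rightarrow> 'v) \<times> ('t \<Rightarrow> 'r option)" where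
  "gbr_step f (gs, loc, res) (Begin t) = (gs, loc, res)"
| "gbr_step f (gs, loc, res) (Rd t A) =
     (gs, loc(t := (\<lambda>x. if x \<in> A then gs x else loc t x)), res)"
| "gbr_step f (gs, loc, res) (Wr t B) =
     ((\<lambda>x. if x \<in> B then fst (f t (loc t)) x else gs x), loc, res)"
| "gbr_step f (gs, loc, res) (Fin t) = (gs, loc, res(t := Some (snd (f t (loc t)))))"

definition gbr_run ::
  "('t \<Rightarrow> ('o \<Rightarrow> 'v) \<Rightarrow> ('o \<Rightarrow> 'v) \<times> 'r) \<Rightarrow> ('t, 'o) event list \<Rightarrow> ('o \<Rightarrow> 'v)
     \<Rightarrow> ('o \<Rightarrow> 'v) \<times> ('t \<Rightarrow> 'r option)" where
  "gbr_run f es s0 =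
     (let (gs, loc, res) = foldl (gbr_step f) (s0, (\<lambda>_. s0), (\<lambda>_. None)) es in (gs, res))"

end

theory Submission
  imports Defs
begin

fun rs :: "('t, 'o) event \<Rightarrow> 'o set" where
  "rs (Rd t A) = A" | "rs (Begin t) = {}" | "rs (Wr t B) = {}" | "rs (Fin t) = {}"

fun ws :: "('t, 'o) event \<Rightarrow> 'o set" where
  "ws (Wr t B) = B" | "ws (Begin t) = {}" | "ws (Rd t A) = {}" | "ws (Fin t) = {}"

definition indep :: "('t, 'o) event \<Rightarrow> ('t, 'o) event \<Rightarrow> bool" where
  "indep e e' \<longleftrightarrow> ev_tx e \<noteq> ev_tx e' \<and> rs e \<inter> ws e' = {} \<and> ws e \<inter> rs e' = {} \<and> ws e \<inter> ws e' = {}"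

lemma step_commute:
  assumes "indep e e'"
  shows "gbr_step f (gbr_step f c e) e' = gbr_step f (gbr_step f c e') e"
proof -
  obtain gs loc res where c: "c = (gs,loc,res)" by (cases c) auto
  show ?thesis using assms unfolding c indep_def
    by (cases e; cases e') (auto simp: fun_eq_iff)
qed

lemma foldl_move_one:
  assumes "\<forall>e'\<in>set N. indep e e'"
  shows "foldl (gbr_step f) (gbr_step f c e) N = gbr_step f (foldl (gbr_step f) c N) e"
  using assms
proof (induction N arbitrary: c)
  case Nil then show ?case by simp
next
  case (Cons x N)
  have "indep e x" using Cons.prems by simp
  then have "gbr_step f (gbr_step f c e) x = gbr_step f (gbr_step f c x) e"
    by (rule step_commute)
  then show ?case using Cons by simp
qed

lemma foldl_sep:
  assumes "\<forall>ys e zs e'. q = ys @ e # zs \<longrightarrow> P e \<longrightarrow> e' \<in> set zs \<longrightarrow> \<not> P e' \<longrightarrow> indep e e'"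
  shows "foldl (gbr_step f) c q = foldl (gbr_step f) c (filter (\<lambda>e. \<not> P e) q @ filter P q)"
  using assms
proof (induction q arbitrary: c)
  case Nil then show ?case by simp
next
  case (Cons e q)
  have H: "\<forall>ys e zs e'. q = ys @ e # zs \<longrightarrow> P e \<longrightarrow> e' \<in> set zs \<longrightarrow> \<not> P e' \<longrightarrow> indep e e'"
  proof (intro allI impI)
    fix ys e' zs e'' assume "q = ys @ e' # zs" "P e'" "e'' \<in> set zs" "\<not> P e''"
    then show "indep e' e''" using Cons.prems[rule_format, of "e # ys" e' zs e''] by simp
  qed
  show ?case
  proof (cases "P e")
    case False
    then show ?thesis using Cons.IH[OF H] by simp
  next
    case True
    have I: "\<forall>e'\<in>set (filter (\<lambda>e. \<not> P e) q). indep e e'"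
      using Cons.prems[rule_format, of "[]" e q] True by auto
    have "foldl (gbr_step f) c (e # q) = foldl (gbr_step f) (gbr_step f c e) q" by simp
    also have "\<dots> = foldl (gbr_step f) (gbr_step f c e) (filter (\<lambda>e. \<not> P e) q @ filter P q)"
      using Cons.IH[OF H] by blast
    also have "\<dots> = foldl (gbr_step f) (gbr_step f (foldl (gbr_step f) c (filter (\<lambda>e. \<not> P e) q)) e) (filter P q)"
      by (simp only: foldl_append foldl_move_one[OF I])
    also have "\<dots> = foldl (gbr_step f) c (filter (\<lambda>e. \<not> P e) (e#q) @ filter P (e#q))"
      using True by simp
    finally show ?thesis .
  qed
qed

lemma foldl_reads:
  "foldl (gbr_step f) (gs, loc, res) (map (Rd t) As) =
     (gs, loc(t := (\<lambda>x. if x \<in> \<Union>(set As) then gs x else loc t x)), res)"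
  by (induction As arbitrary: loc) (auto simp: fun_eq_iff)

lemma foldl_writes:
  "foldl (gbr_step f) (gs, loc, res) (map (Wr t) Bs) =
     ((\<lambda>x. if x \<in> \<Union>(set Bs) then fst (f t (loc t)) x else gs x), loc, res)"
  by (induction Bs arbitrary: gs) (auto simp: fun_eq_iff)

lemma thread_run:
  assumes "thread_ok R W t evs" and "\<forall>s s'. (\<forall>x\<in>R t. s x = s' x) \<longrightarrow> f t s = f t s'"
  shows "\<exists>loc'. foldl (gbr_step f) (gs, loc, res) evs =
            (apply_tx W f t gs, loc', res(t := Some (snd (f t gs))))"
proof -
  obtain As Bs where ev: "evs = [Begin t] @ map (Rd t) As @ map (Wr t) Bs @ [Fin t]"
    and A: "\<Union>(set As) = R t" and B: "\<Union>(set Bs) = W t"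
    using assms(1) unfolding thread_ok_def by blast
  have fl: "f t (\<lambda>x. if x \<in> R t then gs x else loc t x) = f t gs"
    using assms(2) by auto
  show ?thesis unfolding ev
    by (simp only: foldl_append foldl.simps gbr_step.simps foldl_reads foldl_writes A B
        fun_upd_same fl apply_tx_def) blast
qed

lemma thread_form:
  assumes "thread_ok R W t F"
  shows "F \<noteq> []" "hd F = Begin t" "last F = Fin t"
    "filter (\<lambda>e. e = Fin t) F = [Fin t]"
    "\<forall>e\<in>set F. rs e \<subseteq> R t \<and> ws e \<subseteq> W t"
proof -
  obtain As Bs where ev: "F = [Begin t] @ map (Rd t) As @ map (Wr t) Bs @ [Fin t]"
    and A: "\<Union>(set As) = R t" and B: "\<Union>(set Bs) = W t"
    using assms(1) unfolding thread_ok_def by blast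
  show "F \<noteq> []" "hd F = Begin t" "last F = Fin t"
    "filter (\<lambda>e. e = Fin t) F = [Fin t]"
    unfolding ev by (simp_all add: filter_map o_def)
  show "\<forall>e\<in>set F. rs e \<subseteq> R t \<and> ws e \<subseteq> W t"
    unfolding ev using A B by auto
qed

lemma unique_idx:
  assumes "filter (\<lambda>e. e = x) xs = [x]" "i < length xs" "j < length xs" "xs!i = x" "xs!j = x"
  shows "i = j"
proof -
  have "length (filter (\<lambda>e. e = x) xs) = 1" using assms(1) by simp
  then have "card {k. k < length xs \<and> xs!k = x} = 1" by (simp only: length_filter_conv_card)
  then obtain a where a: "{k. k < length xs \<and> xs!k = x} = {a}" by (rule card_1_singletonE)
  have "i \<in> {k. k < length xs \<and> xs!k = x}" "j \<in> {k. k < length xs \<and> xs!k = x}"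
    using assms by auto
  then show ?thesis unfolding a by simp
qed

lemma filter_split_last:
  assumes "k < length es" "P (es!k)" "filter P es \<noteq> []" "last (filter P es) = y"
  shows "\<exists>l. k \<le> l \<and> l < length es \<and> es!l = y"
proof -
  have d: "drop k es = es!k # drop (Suc k) es" using assms(1) by (simp add: Cons_nth_drop_Suc)
  define Y where "Y = filter P (drop k es)"
  have Yne: "Y \<noteq> []" unfolding Y_def d using assms(2) by simp
  have "filter P es = filter P (take k es) @ Y"
    unfolding Y_def by (metis append_take_drop_id filter_append)
  then have "last (filter P es) = last Y" using Yne by simp
  then have "y \<in> set Y" using Yne assms(4) by auto
  then have "y \<in> set (drop k es)" unfolding Y_def by simp
  then obtain i where "i < length (drop k es)" "drop k es ! i = y" by (auto simp: in_set_conv_nth)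
  then show ?thesis using assms(1) by (intro exI[of _ "k+i"]) auto
qed

lemma filter_split_hd:
  assumes "k < length es" "P (es!k)" "filter P es \<noteq> []" "hd (filter P es) = y"
  shows "\<exists>b. b \<le> k \<and> es!b = y"
proof -
  have d: "take (Suc k) es = take k es @ [es!k]" using assms(1) by (simp add: take_Suc_conv_app_nth)
  define X where "X = filter P (take (Suc k) es)"
  have Xne: "X \<noteq> []" unfolding X_def d using assms(2) by simp
  have "filter P es = X @ filter P (drop (Suc k) es)"
    unfolding X_def by (metis append_take_drop_id filter_append)
  then have "hd (filter P es) = hd X" using Xne by simp
  then have "y \<in> set X" using Xne assms(4) by auto
  then have "y \<in> set (take (Suc k) es)" unfolding X_def by simp
  then obtain i where "i < length (take (Suc k) es)" "take (Suc k) es ! i = y" by (auto simp: in_set_conv_nth)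
  then show ?thesis by (intro exI[of _ i]) auto
qed

lemma exec_facts:
  assumes "gbr_execution R W T S es"
  shows "\<And>e. e \<in> set es \<Longrightarrow> ev_tx e \<in> T"
    "\<And>t. t \<in> T \<Longrightarrow> thread_ok R W t (filter (\<lambda>e. ev_tx e = t) es)"
    "\<And>t' t i. (t',t) \<in> S \<Longrightarrow> i < length es \<Longrightarrow> es!i = Begin t \<Longrightarrow> (\<exists>j<i. es!j = Fin t')"
  using assms unfolding gbr_execution_def by blast+

lemma order_base:
  assumes ex: "gbr_execution R W T S es" and um: "(u,m) \<in> S"
    and k: "k < length es" and i: "i < length es" and ku: "ev_tx (es!k) = u" and im: "ev_tx (es!i) = m"
  shows "k < i"
proof -
  have uT: "u \<in> T" using exec_facts(1)[OF ex, of "es!k"] k ku by simp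
  have mT: "m \<in> T" using exec_facts(1)[OF ex, of "es!i"] i im by simp
  have tu: "thread_ok R W u (filter (\<lambda>e. ev_tx e = u) es)" using exec_facts(2)[OF ex uT] .
  have tm: "thread_ok R W m (filter (\<lambda>e. ev_tx e = m) es)" using exec_facts(2)[OF ex mT] .
  obtain b where b: "b \<le> i" "es!b = Begin m"
    using filter_split_hd[of i es "\<lambda>e. ev_tx e = m"] i im thread_form[OF tm] by blast
  have bl: "b < length es" using b i by simp
  obtain j where j: "j < b" "es!j = Fin u"
    using exec_facts(3)[OF ex um bl b(2)] by blast
  obtain l where l: "k \<le> l" "l < length es" "es!l = Fin u"
    using filter_split_last[of k es "\<lambda>e. ev_tx e = u"] k ku thread_form[OF tu] by blast
  have "filter (\<lambda>e. e = Fin u) es = filter (\<lambda>e. e = Fin u) (filter (\<lambda>e. ev_tx e = u) es)"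
    unfolding filter_filter by (rule filter_cong) auto
  also have "\<dots> = [Fin u]" using thread_form(4)[OF tu] .
  finally have "l = j" using unique_idx[of "Fin u" es l j] l j b i by simp
  then show ?thesis using l j b by simp
qed

lemma order_trancl:
  assumes ex: "gbr_execution R W T S es" and cl: "\<forall>a b. (a,b) \<in> S \<longrightarrow> b \<in> T \<longrightarrow> a \<in> T"
    and um: "(u,m) \<in> S\<^sup>+"
  shows "m \<in> T \<longrightarrow> (\<forall>k i. k < length es \<longrightarrow> i < length es \<longrightarrow> ev_tx (es!k) = u \<longrightarrow> ev_tx (es!i) = m \<longrightarrow> k < i)"
  using um
proof (induction rule: trancl_induct)
  case (base y) then show ?case using order_base[OF ex] by blast
next
  case (step y z)
  show ?case
  proof (intro impI allI)
    fix k i assume z: "z \<in> T" and *: "k < length es" "i < length es" "ev_tx (es!k) = u" "ev_tx (es!i) = z"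
    have y: "y \<in> T" using cl step.hyps(2) z by blast
    have "thread_ok R W y (filter (\<lambda>e. ev_tx e = y) es)" using exec_facts(2)[OF ex y] .
    then have "Begin y \<in> set (filter (\<lambda>e. ev_tx e = y) es)"
      using thread_form(1,2) by (metis list.set_sel(1))
    then obtain b where b: "b < length es" "es!b = Begin y" by (auto simp: in_set_conv_nth)
    have "k < b" using step.IH[rule_format, OF y *(1) b(1) *(3)] b(2) by simp
    moreover have "b < i" using order_base[OF ex step.hyps(2) b(1) *(2)] b *(4) by simp
    ultimately show "k < i" by simp
  qed
qed

lemma filter_eq_app_Cons:
  "filter Q xs = ys @ y # zs \<Longrightarrow> \<exists>us vs. xs = us @ y # vs \<and> filter Q us = ys"
proof (induction ys arbitrary: xs)
  case Nil
  then obtain us vs where "xs = us @ y # vs" "\<forall>u\<in>set us. \<not> Q u" by (auto simp: filter_eq_Cons_iff)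
  then show ?case by (intro exI[of _ us] exI[of _ vs]) simp
next
  case (Cons a ys)
  then obtain us vs where uv: "xs = us @ a # vs" "\<forall>u\<in>set us. \<not> Q u" "Q a" "ys @ y # zs = filter Q vs"
    by (auto simp: filter_eq_Cons_iff)
  then obtain us' vs' where "vs = us' @ y # vs'" "filter Q us' = ys" using Cons.IH by metis
  then show ?case using uv by (intro exI[of _ "us @ a # us'"] exI[of _ vs']) simp
qed

lemma exec_filter:
  assumes ex: "gbr_execution R W (insert m T) S es" and mT: "m \<notin> T" and nm: "\<forall>t\<in>T. (m,t) \<notin> S"
  shows "gbr_execution R W T S (filter (\<lambda>e. ev_tx e \<noteq> m) es)"
  unfolding gbr_execution_def
proof (intro conjI ballI allI impI)
  fix e assume "e \<in> set (filter (\<lambda>e. ev_tx e \<noteq> m) es)"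
  then show "ev_tx e \<in> T" using exec_facts(1)[OF ex] by auto
next
  fix t assume t: "t \<in> T"
  have "filter (\<lambda>e. ev_tx e = t) (filter (\<lambda>e. ev_tx e \<noteq> m) es) = filter (\<lambda>e. ev_tx e = t) es"
    unfolding filter_filter using t mT by (intro filter_cong) auto
  then show "thread_ok R W t (filter (\<lambda>e. ev_tx e = t) (filter (\<lambda>e. ev_tx e \<noteq> m) es))"
    using exec_facts(2)[OF ex] t by simp
next
  fix t' t i
  let ?F = "filter (\<lambda>e. ev_tx e \<noteq> m) es"
  assume a: "(t',t) \<in> S" "i < length ?F" "?F ! i = Begin t"
  have F: "?F = take i ?F @ Begin t # drop (Suc i) ?F" using a(2,3) by (metis id_take_nth_drop)
  obtain us vs where uv: "es = us @ Begin t # vs" "filter (\<lambda>e. ev_tx e \<noteq> m) us = take i ?F"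
    using filter_eq_app_Cons[OF F] by blast
  have "Begin t \<in> set ?F" using a(2,3) by (metis nth_mem)
  then have tm: "t \<noteq> m" by simp
  have tT: "t \<in> T" using exec_facts(1)[OF ex, of "Begin t"] uv(1) tm by auto
  have t'm: "t' \<noteq> m" using nm tT a(1) by blast
  have "length us < length es" "es ! length us = Begin t" using uv(1) by auto
  then obtain j where j: "j < length us" "es!j = Fin t'"
    using exec_facts(3)[OF ex a(1)] by blast
  have "Fin t' \<in> set us" using j uv(1) by (metis nth_append nth_mem)
  then have "Fin t' \<in> set (filter (\<lambda>e. ev_tx e \<noteq> m) us)" using t'm by simp
  then have "Fin t' \<in> set (take i ?F)" using uv(2) by simp
  then obtain j' where "j' < length (take i ?F)" "take i ?F ! j' = Fin t'" by (auto simp: in_set_conv_nth)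
  then show "\<exists>j<i. ?F ! j = Fin t'" by auto
qed

lemma main:
  assumes "distinct \<tau>"
  and "deterministic (set \<tau>) R f"
  and "gbr_execution R W (set \<tau>) S es"
  and "\<forall>a b. (a,b) \<in> S \<longrightarrow> b \<in> set \<tau> \<longrightarrow> a \<in> set \<tau>"
  and "\<forall>i j. i < j \<longrightarrow> j < length \<tau> \<longrightarrow> (\<tau>!j, \<tau>!i) \<notin> S\<^sup>+"
  and "\<forall>t\<in>set \<tau>. \<forall>t'\<in>set \<tau>. conflict R W t t' \<longrightarrow> (t,t') \<in> S\<^sup>+ \<or> (t',t) \<in> S\<^sup>+"
  shows "gbr_run f es s0 = seq_run W f \<tau> s0"
  using assms
proof (induction \<tau> arbitrary: es rule: rev_induct)
  case Nil
  then have "es = []" using exec_facts(1)[OF Nil.prems(3)] by (cases es) auto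
  then show ?case by (simp add: gbr_run_def seq_run_def)
next
  case (snoc m \<tau>)
  note ex = snoc.prems(3)
  have mt: "m \<notin> set \<tau>" using snoc.prems(1) by simp
  have dist: "distinct \<tau>" using snoc.prems(1) by simp
  have topo: "\<forall>i j. i < j \<longrightarrow> j < length \<tau> \<longrightarrow> (\<tau>!j, \<tau>!i) \<notin> S\<^sup>+"
  proof (intro allI impI)
    fix i j assume "i<j" "j<length \<tau>"
    then show "(\<tau>!j, \<tau>!i) \<notin> S\<^sup>+" using snoc.prems(5)[rule_format, of i j] by (simp add: nth_append)
  qed
  have nm: "\<forall>t\<in>set \<tau>. (m,t) \<notin> S\<^sup>+"
  proof
    fix t assume "t \<in> set \<tau>"
    then obtain i where "i < length \<tau>" "\<tau>!i = t" by (auto simp: in_set_conv_nth)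
    then show "(m,t) \<notin> S\<^sup>+" using snoc.prems(5)[rule_format, of i "length \<tau>"] by (simp add: nth_append)
  qed
  have nm1: "\<forall>t\<in>set \<tau>. (m,t) \<notin> S" using nm by blast
  have det: "deterministic (set \<tau>) R f" using snoc.prems(2) unfolding deterministic_def by simp
  have cl: "\<forall>a b. (a,b) \<in> S \<longrightarrow> b \<in> set \<tau> \<longrightarrow> a \<in> set \<tau>"
    using snoc.prems(4) nm1 by auto
  have conf: "\<forall>t\<in>set \<tau>. \<forall>t'\<in>set \<tau>. conflict R W t t' \<longrightarrow> (t,t') \<in> S\<^sup>+ \<or> (t',t) \<in> S\<^sup>+"
    using snoc.prems(6) by simp
  have ex': "gbr_execution R W (insert m (set \<tau>)) S es" using ex by simp
  have ex1: "gbr_execution R W (set \<tau>) S (filter (\<lambda>e. ev_tx e \<noteq> m) es)"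
    using exec_filter[OF ex' mt nm1] .
  have IH: "gbr_run f (filter (\<lambda>e. ev_tx e \<noteq> m) es) s0 = seq_run W f \<tau> s0"
    using snoc.IH[OF dist det ex1 cl topo conf] .
  have mT: "m \<in> set (\<tau> @ [m])" by simp
  have ind: "\<forall>ys e zs e'. es = ys @ e # zs \<longrightarrow> ev_tx e = m \<longrightarrow> e' \<in> set zs \<longrightarrow> \<not> ev_tx e' = m \<longrightarrow> indep e e'"
  proof (intro allI impI)
    fix ys e zs e' assume a: "es = ys @ e # zs" "ev_tx e = m" "e' \<in> set zs" "\<not> ev_tx e' = m"
    define u where "u = ev_tx e'"
    have e'es: "e' \<in> set es" using a by simp
    have ees: "e \<in> set es" using a by simp
    have uT: "u \<in> set \<tau>" using exec_facts(1)[OF ex e'es] a(4) u_def by simp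
    obtain p where p: "p < length zs" "zs!p = e'" using a(3) by (auto simp: in_set_conv_nth)
    define k where "k = length ys"
    define i where "i = Suc (length ys + p)"
    have k: "k < length es" "es!k = e" using a(1) unfolding k_def by auto
    have i: "i < length es" "es!i = e'" using a(1) p unfolding i_def by (auto simp: nth_append)
    have "(u,m) \<notin> S\<^sup>+"
    proof
      assume "(u,m) \<in> S\<^sup>+"
      then have "i < k" using order_trancl[OF ex snoc.prems(4)] mT i k a(2) u_def by blast
      then show False unfolding i_def k_def by simp
    qed
    moreover have "(m,u) \<notin> S\<^sup>+" using nm uT by blast
    ultimately have nc: "\<not> conflict R W u m" using snoc.prems(6) uT mT by auto
    have um: "u \<noteq> m" using a(4) u_def by simp
    have uT': "u \<in> set (\<tau> @ [m])" using uT by simp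
    have ru: "rs e' \<subseteq> R u \<and> ws e' \<subseteq> W u"
      using thread_form(5)[OF exec_facts(2)[OF ex uT']] e'es u_def by auto
    have rm: "rs e \<subseteq> R m \<and> ws e \<subseteq> W m"
      using thread_form(5)[OF exec_facts(2)[OF ex mT]] ees a(2) by auto
    show "indep e e'" unfolding indep_def using nc um ru rm a(2) u_def unfolding conflict_def by auto
  qed
  have sep: "foldl (gbr_step f) (s0, \<lambda>_. s0, \<lambda>_. None) es =
     foldl (gbr_step f) (foldl (gbr_step f) (s0, \<lambda>_. s0, \<lambda>_. None) (filter (\<lambda>e. ev_tx e \<noteq> m) es))
       (filter (\<lambda>e. ev_tx e = m) es)"
    using foldl_sep[OF ind] by simp
  obtain gs loc res where c: "foldl (gbr_step f) (s0, \<lambda>_. s0, \<lambda>_. None) (filter (\<lambda>e. ev_tx e \<noteq> m) es) = (gs, loc, res)"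
    by (metis prod_cases3)
  have sq: "seq_run W f \<tau> s0 = (gs, res)" using IH c unfolding gbr_run_def by simp
  have detm: "\<forall>s s'. (\<forall>x\<in>R m. s x = s' x) \<longrightarrow> f m s = f m s'"
    using snoc.prems(2) unfolding deterministic_def by simp
  obtain loc' where th: "foldl (gbr_step f) (gs, loc, res) (filter (\<lambda>e. ev_tx e = m) es) =
      (apply_tx W f m gs, loc', res(m := Some (snd (f m gs))))"
    using thread_run[of R W m "filter (\<lambda>e. ev_tx e = m) es" f gs loc res, OF exec_facts(2)[OF ex mT] detm] by blast
  have "seq_run W f (\<tau> @ [m]) s0 = (apply_tx W f m gs, res(m := Some (snd (f m gs))))"
    using sq unfolding seq_run_def by simp
  then show ?case unfolding gbr_run_def using sep c th by simp
qed

lemma topo_exists: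
  assumes "finite T" "S \<subseteq> T \<times> T" "acyclic S"
  shows "\<exists>\<tau>. distinct \<tau> \<and> set \<tau> = T \<and> (\<forall>i j. i < j \<longrightarrow> j < length \<tau> \<longrightarrow> (\<tau>!j, \<tau>!i) \<notin> S\<^sup>+)"
proof -
  have fS: "finite (S\<^sup>+)" using finite_subset[OF assms(2)] assms(1) by simp
  have ac: "acyclic (S\<^sup>+)" using assms(3) by (simp add: acyclic_def trancl_id trans_trancl)
  have wf: "wf ((S\<^sup>+)\<inverse>)" using finite_acyclic_wf_converse[OF fS ac] .
  show ?thesis using assms(1)
  proof (induction T rule: finite_remove_induct)
    case empty then show ?case by simp
  next
    case (remove A)
    obtain a where a: "a \<in> A" using remove.hyps(2) by blast
    obtain z where z: "z \<in> A" "\<And>y. (y,z) \<in> (S\<^sup>+)\<inverse> \<Longrightarrow> y \<notin> A"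
      using wfE_min[OF wf a] by blast
    obtain \<tau> where \<tau>: "distinct \<tau>" "set \<tau> = A - {z}"
        "\<forall>i j. i < j \<longrightarrow> j < length \<tau> \<longrightarrow> (\<tau>!j, \<tau>!i) \<notin> S\<^sup>+"
      using remove.IH[OF z(1)] by blast
    show ?case
    proof (intro exI[of _ "\<tau> @ [z]"] conjI allI impI)
      show "distinct (\<tau> @ [z])" using \<tau> by simp
      show "set (\<tau> @ [z]) = A" using \<tau> z by auto
      fix i j assume ij: "i < j" "j < length (\<tau> @ [z])"
      show "((\<tau> @ [z])!j, (\<tau> @ [z])!i) \<notin> S\<^sup>+"
      proof (cases "j = length \<tau>")
        case True
        then have il: "i < length \<tau>" using ij by simp
        then have "\<tau>!i \<in> A" using \<tau>(2) nth_mem by blast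
        then have "(z, \<tau>!i) \<notin> S\<^sup>+" using z(2) by blast
        then show ?thesis using True il by (simp add: nth_append)
      next
        case False
        then show ?thesis using ij \<tau>(3) by (simp add: nth_append)
      qed
    qed
  qed
qed

theorem theorem1:
  fixes T :: "'t set" and S :: "('t \<times> 't) set"
    and R W :: "'t \<Rightarrow> 'o set"
    and f :: "'t \<Rightarrow> ('o \<Rightarrow> 'v) \<Rightarrow> ('o \<Rightarrow> 'v) \<times> 'r"
  assumes "finite T"
    and "deterministic T R f"
    and "valid_schedule R W T S"
  shows "\<exists>\<tau>. distinct \<tau> \<and> set \<tau> = T \<and>
           (\<forall>s0 es. gbr_execution R W T S es \<longrightarrow> gbr_run f es s0 = seq_run W f \<tau> s0)"
proof -
  have ST: "S \<subseteq> T \<times> T" and ac: "acyclic S"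
    and conf: "\<forall>t\<in>T. \<forall>t'\<in>T. conflict R W t t' \<longrightarrow> (t, t') \<in> S\<^sup>+ \<or> (t', t) \<in> S\<^sup>+"
    using assms(3) unfolding valid_schedule_def schedule_def by auto
  obtain \<tau> where \<tau>: "distinct \<tau>" "set \<tau> = T"
      "\<forall>i j. i < j \<longrightarrow> j < length \<tau> \<longrightarrow> (\<tau>!j, \<tau>!i) \<notin> S\<^sup>+"
    using topo_exists[OF assms(1) ST ac] by blast
  have cl: "\<forall>a b. (a,b) \<in> S \<longrightarrow> b \<in> set \<tau> \<longrightarrow> a \<in> set \<tau>" using ST \<tau>(2) by auto
  show ?thesis
  proof (intro exI[of _ \<tau>] conjI allI impI)
    show "distinct \<tau>" "set \<tau> = T" using \<tau> by auto
    fix s0 es assume "gbr_execution R W T S es"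
    then show "gbr_run f es s0 = seq_run W f \<tau> s0"
      using main[OF \<tau>(1), of R f W S es s0] assms(2) \<tau>(2,3) cl conf by simp
  qed
qed

end
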